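(* Let $D$ be a pv-monoid (idempotent, with symmetric valuation function), $P$ a nonempty finite set of ports, $I,J$ nonempty finite index sets and $m_i$ ($i\in I$), $m'_j$ ($j\in J$) full monomials over $P$. Then \[\Big(\sum_{i\in I}m_i\Big)\uplus\Big(\sum_{j\in J}m'_j\Big)\equiv\begin{cases}\sum_{i\in I}m_i+\sum_{j\in J}m'_j&\text{if } m_i\not\equiv m'_j\text{ for every } i\in I,\ j\in J,\\ 0&\text{otherwise.}\end{cases}\]
   Context: A pv-monoid $(D,\oplus,\mathrm{val},\otimes,0,1)$ consists of a commutative monoid $(D,\oplus,0)$, a map $\mathrm{val}$ from nonempty finite sequences over $D$ to $D$ with $\mathrm{val}(d)=d$ and $\mathrm{val}(d_1,\dots,d_n)=0$ whenever some $d_i=0$, a binary operation $\otimes$ and an element $1$ with $\mathrm{val}(1,\dots,1)=1$, $0\otimes d=d\otimes0=0$, $1\otimes d=d\otimes1=d$. Standing assumption: $D$ is idempotent and $\mathrm{val}$ is symmetric. An empty $\oplus$-sum is $0$. $I(P)$ is the set of nonempty subsets of $P$, $C(P)$ the set of nonempty subsets of $I(P)$. PIL formulas: $\phi::=true\mid p\mid\overline{\phi}\mid\phi\vee\phi$ ($p\in P$), $\alpha\models_i p$ iff $p\in\alpha$, negation and disjunction as usual, $\wedge$ via De Morgan. A full monomial is a PIL formula $\bigwedge_{p\in P_+}p\wedge\bigwedge_{p\in P_-}\overline p$ with $P_+\cup P_-=P$, $P_+\cap P_-=\emptyset$. PCL formulas: $f::=true\mid\phi\mid\neg f\mid f\sqcup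 f\mid f+f$; $\gamma\models\phi$ iff every $\alpha\in\gamma$ satisfies $\phi$; $\neg,\sqcup$ are complement and union; $\gamma\models f_1+f_2$ iff $\gamma=\gamma_1\cup\gamma_2$ with $\gamma_1,\gamma_2\in C(P)$, $\gamma_1\models f_1,\gamma_2\models f_2$. $\sum$ is $+$-combination. Weighted formulas: constants $d\in D$, PCL formulas, $\oplus,\otimes,\uplus$ and $*$; semantics $\|\cdot\|:C(P)\to D$ with $\|d\|(\gamma)=d$, $\|f\|(\gamma)=1$ if $\gamma\models f$ and $0$ otherwise, $\oplus,\otimes$ pointwise, $\|\zeta_1\uplus\zeta_2\|(\gamma)=\bigoplus(\|\zeta_1\|(\gamma_1)\otimes\|\zeta_2\|(\gamma_2))$ over disjoint $\gamma_1,\gamma_2\in C(P)$ with union $\gamma$. $\equiv$ means equality of semantics on all of $C(P)$. *)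

theory Defs
  imports "HOL-Library.Multiset"
begin

record 'd pvm =
  pplus :: "'d \<Rightarrow> 'd \<Rightarrow> 'd"
  pval  :: "'d list \<Rightarrow> 'd"
  ptimes :: "'d \<Rightarrow> 'd \<Rightarrow> 'd"
  pzero :: 'd
  pone  :: 'd

definition pv_monoid :: "'d pvm \<Rightarrow> bool" where
  "pv_monoid D \<longleftrightarrow>
     (\<forall>a b c. pplus D (pplus D a b) c = pplus D a (pplus D b c)) \<and>
     (\<forall>a b. pplus D a b = pplus D b a) \<and>
     (\<forall>a. pplus D (pzero D) a = a) \<and>
     (\<forall>d. pval D [d] = d) \<and>
     (\<forall>ds. ds \<noteq> [] \<and> pzero D \<in> set ds \<longrightarrow> pval D ds = pzero D) \<and>
     (\<forall>n. n \<ge> 1 \<longrightarrow> pval D (replicate n (pone D)) = pone D) \<and>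
     (\<forall>d. ptimes D (pzero D) d = pzero D \<and> ptimes D d (pzero D) = pzero D) \<and>
     (\<forall>d. ptimes D (pone D) d = d \<and> ptimes D d (pone D) = d)"

definition pv_idempotent :: "'d pvm \<Rightarrow> bool" where
  "pv_idempotent D \<longleftrightarrow> (\<forall>d. pplus D d d = d)"

definition pv_symmetric_val :: "'d pvm \<Rightarrow> bool" where
  "pv_symmetric_val D \<longleftrightarrow>
     (\<forall>ds es. ds \<noteq> [] \<and> mset ds = mset es \<longrightarrow> pval D ds = pval D es)"

definition bigplus :: "'d pvm \<Rightarrow> ('a \<Rightarrow> 'd) \<Rightarrow> 'a set \<Rightarrow> 'd" where
  "bigplus D f A = Finite_Set.fold (\<lambda>x acc. pplus D (f x) acc) (pzero D) A"

definition IP :: "'p set \<Rightarrow> 'p set set" where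
  "IP P = {\<alpha>. \<alpha> \<noteq> {} \<and> \<alpha> \<subseteq> P}"

definition CP :: "'p set \<Rightarrow> 'p set set set" where
  "CP P = {\<gamma>. \<gamma> \<noteq> {} \<and> \<gamma> \<subseteq> IP P}"

datatype 'p pil = PTrue | PVar 'p | PNeg "'p pil" | POr "'p pil" "'p pil"

definition PAnd :: "'p pil \<Rightarrow> 'p pil \<Rightarrow> 'p pil" where
  "PAnd a b = PNeg (POr (PNeg a) (PNeg b))"

fun pil_sat :: "'p set \<Rightarrow> 'p pil \<Rightarrow> bool" where
  "pil_sat \<alpha> PTrue = True"
| "pil_sat \<alpha> (PVar p) = (p \<in> \<alpha>)"
| "pil_sat \<alpha> (PNeg \<phi>) = (\<not> pil_sat \<alpha> \<phi>)"
| "pil_sat \<alpha> (POr \<phi> \<psi>) = (pil_sat \<alpha> \<phi> \<or> pil_sat \<alpha> \<psi>)"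

fun pil_conj :: "'p pil list \<Rightarrow> 'p pil" where
  "pil_conj [] = PTrue"
| "pil_conj [\<phi>] = \<phi>"
| "pil_conj (\<phi> # \<psi> # \<phi>s) = PAnd \<phi> (pil_conj (\<psi> # \<phi>s))"

definition is_full_monomial :: "'p set \<Rightarrow> 'p pil \<Rightarrow> bool" where
  "is_full_monomial P \<phi> \<longleftrightarrow>
     (\<exists>ps ns. set ps \<union> set ns = P \<and> set ps \<inter> set ns = {} \<and> distinct (ps @ ns) \<and>
        \<phi> = pil_conj (map PVar ps @ map (\<lambda>p. PNeg (PVar p)) ns))"

datatype 'p pcl = CTrue | CPil "'p pil" | CNeg "'p pcl" | CUnion "'p pcl" "'p pcl"
  | CPlus "'p pcl" "'p pcl"

fun pcl_sat :: "'p set \<Rightarrow> 'p set set \<Rightarrow> 'p pcl \<Rightarrow> bool" where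
  "pcl_sat P \<gamma> CTrue = True"
| "pcl_sat P \<gamma> (CPil \<phi>) = (\<forall>\<alpha>\<in>\<gamma>. pil_sat \<alpha> \<phi>)"
| "pcl_sat P \<gamma> (CNeg f) = (\<not> pcl_sat P \<gamma> f)"
| "pcl_sat P \<gamma> (CUnion f g) = (pcl_sat P \<gamma> f \<or> pcl_sat P \<gamma> g)"
| "pcl_sat P \<gamma> (CPlus f g) = (\<exists>\<gamma>1 \<gamma>2. \<gamma>1 \<in> CP P \<and> \<gamma>2 \<in> CP P \<and> \<gamma> = \<gamma>1 \<union> \<gamma>2 \<and>
                                   pcl_sat P \<gamma>1 f \<and> pcl_sat P \<gamma>2 g)"

fun pcl_sum :: "'p pcl list \<Rightarrow> 'p pcl" where
  "pcl_sum [] = CTrue"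
| "pcl_sum [f] = f"
| "pcl_sum (f # g # fs) = CPlus f (pcl_sum (g # fs))"

datatype ('p, 'd) wf = WConst 'd | WPcl "'p pcl" | WPlus "('p,'d) wf" "('p,'d) wf"
  | WTimes "('p,'d) wf" "('p,'d) wf" | WUplus "('p,'d) wf" "('p,'d) wf"

fun wsem :: "'d pvm \<Rightarrow> 'p set \<Rightarrow> ('p, 'd) wf \<Rightarrow> 'p set set \<Rightarrow> 'd" where
  "wsem D P (WConst d) \<gamma> = d"
| "wsem D P (WPcl f) \<gamma> = (if pcl_sat P \<gamma> f then pone D else pzero D)"
| "wsem D P (WPlus z1 z2) \<gamma> = pplus D (wsem D P z1 \<gamma>) (wsem D P z2 \<gamma>)"
| "wsem D P (WTimes z1 z2) \<gamma> = ptimes D (wsem D P z1 \<gamma>) (wsem D P z2 \<gamma>)"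
| "wsem D P (WUplus z1 z2) \<gamma> =
     bigplus D (\<lambda>(\<gamma>1, \<gamma>2). ptimes D (wsem D P z1 \<gamma>1) (wsem D P z2 \<gamma>2))
       {(\<gamma>1, \<gamma>2). \<gamma>1 \<in> CP P \<and> \<gamma>2 \<in> CP P \<and> \<gamma>1 \<inter> \<gamma>2 = {} \<and> \<gamma>1 \<union> \<gamma>2 = \<gamma>}"

definition wequiv :: "'d pvm \<Rightarrow> 'p set \<Rightarrow> ('p, 'd) wf \<Rightarrow> ('p, 'd) wf \<Rightarrow> bool" where
  "wequiv D P z1 z2 \<longleftrightarrow> (\<forall>\<gamma>\<in>CP P. wsem D P z1 \<gamma> = wsem D P z2 \<gamma>)"

end

theory Submission
  imports Defs
begin

lemma pil_conj_sat: "pil_sat a (pil_conj l) \<longleftrightarrow> (\<forall>f\<in>set l. pil_sat a f)"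
  by (induction l rule: pil_conj.induct) (auto simp: PAnd_def)

lemma full_mono_ex:
  assumes "is_full_monomial P m"
  shows "\<exists>a. a \<subseteq> P \<and> (\<forall>x. x \<subseteq> P \<longrightarrow> (pil_sat x m \<longleftrightarrow> x = a))"
proof -
  obtain ps ns where h: "set ps \<union> set ns = P" "set ps \<inter> set ns = {}"
    "m = pil_conj (map PVar ps @ map (\<lambda>p. PNeg (PVar p)) ns)"
    using assms unfolding is_full_monomial_def by blast
  show ?thesis
  proof (rule exI[of _ "set ps"], intro conjI allI impI)
    show "set ps \<subseteq> P" using h(1) by blast
    fix x assume x: "x \<subseteq> P"
    have "pil_sat x m \<longleftrightarrow> set ps \<subseteq> x \<and> x \<inter> set ns = {}"
      by (auto simp: h(3) pil_conj_sat) (metis UnI1 UnI2 image_eqI pil_sat.simps(2,3))+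
    then show "pil_sat x m \<longleftrightarrow> x = set ps"
      using x h(1,2) by blast
  qed
qed

definition am :: "'p set \<Rightarrow> 'p pil \<Rightarrow> 'p set" where
  "am P m = (SOME a. a \<subseteq> P \<and> (\<forall>x. x \<subseteq> P \<longrightarrow> (pil_sat x m \<longleftrightarrow> x = a)))"

lemma am_prop:
  assumes "is_full_monomial P m"
  shows "am P m \<subseteq> P" "\<And>x. x \<subseteq> P \<Longrightarrow> pil_sat x m \<longleftrightarrow> x = am P m"
  using someI_ex[OF full_mono_ex[OF assms]] unfolding am_def by blast+

lemma cpil_sat:
  assumes "is_full_monomial P m" "g \<in> CP P"
  shows "pcl_sat P g (CPil m) \<longleftrightarrow> g = {am P m} \<and> am P m \<noteq> {}"
proof -
  have "\<forall>x\<in>g. x \<subseteq> P \<and> x \<noteq> {}" "g \<noteq> {}" using assms(2) unfolding CP_def IP_def by auto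
  then show ?thesis using am_prop[OF assms(1)] by auto
qed

lemma sum_sat:
  assumes "ms \<noteq> []" "\<forall>m\<in>set ms. is_full_monomial P m" "g \<in> CP P"
  shows "pcl_sat P g (pcl_sum (map CPil ms)) \<longleftrightarrow> g = am P ` set ms \<and> (\<forall>m\<in>set ms. am P m \<noteq> {})"
  using assms
proof (induction ms arbitrary: g)
  case Nil
  then show ?case by simp
next
  case (Cons m ms)
  show ?case
  proof (cases "ms = []")
    case True
    then show ?thesis using Cons.prems cpil_sat[of P m g] by simp
  next
    case False
    then obtain m2 ms2 where ms: "ms = m2 # ms2" by (cases ms) auto
    have CPm: "{am P m} \<in> CP P" if "am P m \<noteq> {}"
      using that am_prop(1)[of P m] Cons.prems unfolding CP_def IP_def by auto
    have CPs: "am P ` set ms \<in> CP P" if "\<forall>m\<in>set ms. am P m \<noteq> {}"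
      using that am_prop(1)[of P] Cons.prems False unfolding CP_def IP_def by auto
    have "pcl_sat P g (pcl_sum (map CPil (m # ms))) \<longleftrightarrow>
      (\<exists>g1 g2. g1 \<in> CP P \<and> g2 \<in> CP P \<and> g = g1 \<union> g2 \<and> pcl_sat P g1 (CPil m) \<and> pcl_sat P g2 (pcl_sum (map CPil ms)))"
      using ms by simp
    also have "\<dots> \<longleftrightarrow> g = am P ` set (m # ms) \<and> (\<forall>m\<in>set (m#ms). am P m \<noteq> {})"
    proof
      have e1: "\<And>g1. g1 \<in> CP P \<Longrightarrow> pcl_sat P g1 (CPil m) \<longleftrightarrow> g1 = {am P m} \<and> am P m \<noteq> {}"
        using cpil_sat[of P m] Cons.prems(2) by simp
      have e2: "\<And>g2. g2 \<in> CP P \<Longrightarrow> pcl_sat P g2 (pcl_sum (map CPil ms)) \<longleftrightarrow>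
          g2 = am P ` set ms \<and> (\<forall>m\<in>set ms. am P m \<noteq> {})"
        using Cons.IH[OF False] Cons.prems(2) by simp
      {
        assume "\<exists>g1 g2. g1 \<in> CP P \<and> g2 \<in> CP P \<and> g = g1 \<union> g2 \<and> pcl_sat P g1 (CPil m) \<and> pcl_sat P g2 (pcl_sum (map CPil ms))"
        then obtain g1 g2 where gg: "g1 \<in> CP P" "g2 \<in> CP P" "g = g1 \<union> g2"
          "pcl_sat P g1 (CPil m)" "pcl_sat P g2 (pcl_sum (map CPil ms))" by blast
        have "g1 = {am P m} \<and> am P m \<noteq> {}" using e1[OF gg(1)] gg(4) by blast
        moreover have "g2 = am P ` set ms \<and> (\<forall>m\<in>set ms. am P m \<noteq> {})" using e2[OF gg(2)] gg(5) by blast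
        ultimately show "g = am P ` set (m # ms) \<and> (\<forall>m\<in>set (m#ms). am P m \<noteq> {})"
          using gg(3) by simp
      }
      {
        assume h: "g = am P ` set (m # ms) \<and> (\<forall>m\<in>set (m#ms). am P m \<noteq> {})"
        then have v1: "am P m \<noteq> {}" and v2: "\<forall>m\<in>set ms. am P m \<noteq> {}" by auto
        have "pcl_sat P {am P m} (CPil m)" using e1[OF CPm[OF v1]] v1 by blast
        moreover have "pcl_sat P (am P ` set ms) (pcl_sum (map CPil ms))" using e2[OF CPs[OF v2]] v2 by blast
        moreover have "g = {am P m} \<union> am P ` set ms" using h by simp
        ultimately show "\<exists>g1 g2. g1 \<in> CP P \<and> g2 \<in> CP P \<and> g = g1 \<union> g2 \<and> pcl_sat P g1 (CPil m) \<and> pcl_sat P g2 (pcl_sum (map CPil ms))"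
          using CPm[OF v1] CPs[OF v2] by blast
      }
    qed
    finally show ?thesis .
  qed
qed

lemma CP_finite: "finite P \<Longrightarrow> finite (CP P)"
  unfolding CP_def IP_def
  by (rule finite_subset[of _ "Pow (Pow P)"]) auto

lemma bigplus_single:
  assumes pv: "pv_monoid D" and fin: "finite S"
    and that: "\<forall>x\<in>S. \<forall>y\<in>S. Q x \<and> Q y \<longrightarrow> x = y"
  shows "bigplus D (\<lambda>x. if Q x then pone D else pzero D) S =
         (if (\<exists>x\<in>S. Q x) then pone D else pzero D)"
proof -
  let ?f = "\<lambda>x. if Q x then pone D else pzero D"
  have A: "\<And>a b c. pplus D (pplus D a b) c = pplus D a (pplus D b c)"
    and C: "\<And>a b. pplus D a b = pplus D b a"
    and Z: "\<And>a. pplus D (pzero D) a = a" using pv unfolding pv_monoid_def by auto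
  interpret cf: comp_fun_commute "\<lambda>x acc. pplus D (?f x) acc"
  proof
    fix x y
    show "(\<lambda>acc. pplus D (?f y) acc) \<circ> (\<lambda>acc. pplus D (?f x) acc) =
          (\<lambda>acc. pplus D (?f x) acc) \<circ> (\<lambda>acc. pplus D (?f y) acc)"
      by (rule ext) (simp add: A[symmetric] C[of "?f x" "?f y"])
  qed
  have z: "\<forall>x\<in>A. \<not> Q x \<Longrightarrow> bigplus D ?f A = pzero D" if fa: "finite A" for A
    using fa
  proof (induction A rule: finite_induct)
    case empty then show ?case by (simp add: bigplus_def)
  next
    case (insert x F)
    then show ?case unfolding bigplus_def by (simp add: Z)
  qed
  show ?thesis
  proof (cases "\<exists>x\<in>S. Q x")
    case True
    then obtain x where x: "x \<in> S" "Q x" by blast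
    have "S = insert x (S - {x})" using x by blast
    then have "bigplus D ?f S = pplus D (?f x) (bigplus D ?f (S - {x}))"
      unfolding bigplus_def using fin by (metis Diff_iff cf.fold_insert finite_Diff insertI1)
    also have "bigplus D ?f (S - {x}) = pzero D" using z[of "S - {x}"] fin that x by auto
    finally show ?thesis using x C Z True by simp
  next
    case False
    then show ?thesis using z[OF fin] by auto
  qed
qed

theorem mainTheorem14:
  fixes D :: "'d pvm" and P :: "'p set" and ms ms' :: "'p pil list"
  assumes "pv_monoid D" and "pv_idempotent D" and "pv_symmetric_val D"
    and "finite P" and "P \<noteq> {}"
    and "ms \<noteq> []" and "ms' \<noteq> []"
    and "\<forall>m\<in>set ms. is_full_monomial P m"
    and "\<forall>m\<in>set ms'. is_full_monomial P m"
  shows "wequiv D P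
           (WUplus (WPcl (pcl_sum (map CPil ms))) (WPcl (pcl_sum (map CPil ms'))))
           (if (\<forall>m\<in>set ms. \<forall>m'\<in>set ms'. \<not> wequiv D P (WPcl (CPil m)) (WPcl (CPil m')))
            then WPcl (CPlus (pcl_sum (map CPil ms)) (pcl_sum (map CPil ms')))
            else WConst (pzero D))"
proof -
  note pv = assms(1)
  let ?sA = "pcl_sum (map CPil ms)" and ?sB = "pcl_sum (map CPil ms')"
  let ?A = "am P ` set ms" and ?B = "am P ` set ms'"
  let ?vA = "\<forall>m\<in>set ms. am P m \<noteq> {}" and ?vB = "\<forall>m\<in>set ms'. am P m \<noteq> {}"
  let ?c = "\<forall>m\<in>set ms. \<forall>m'\<in>set ms'. \<not> wequiv D P (WPcl (CPil m)) (WPcl (CPil m'))"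
  have T: "\<And>d. ptimes D (pzero D) d = pzero D \<and> ptimes D d (pzero D) = pzero D"
    and O: "\<And>d. ptimes D (pone D) d = d \<and> ptimes D d (pone D) = d"
    using pv unfolding pv_monoid_def by auto
  have sA: "\<And>g. g \<in> CP P \<Longrightarrow> pcl_sat P g ?sA \<longleftrightarrow> g = ?A \<and> ?vA"
    using sum_sat assms(6,8) by blast
  have sB: "\<And>g. g \<in> CP P \<Longrightarrow> pcl_sat P g ?sB \<longleftrightarrow> g = ?B \<and> ?vB"
    using sum_sat assms(7,9) by blast
  have ACP: "?A \<in> CP P" if ?vA
    using that assms(6,8) am_prop(1)[of P] unfolding CP_def IP_def by auto
  have BCP: "?B \<in> CP P" if ?vB
    using that assms(7,9) am_prop(1)[of P] unfolding CP_def IP_def by auto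
  have single: "{am P m} \<in> CP P" if "is_full_monomial P m" "am P m \<noteq> {}" for m
    using that am_prop(1)[of P m] unfolding CP_def IP_def by auto
  show ?thesis unfolding wequiv_def[of D P "WUplus (WPcl ?sA) (WPcl ?sB)"]
  proof
    fix g assume g: "g \<in> CP P"
    define S where "S = {(g1, g2). g1 \<in> CP P \<and> g2 \<in> CP P \<and> g1 \<inter> g2 = {} \<and> g1 \<union> g2 = g}"
    define Q where "Q = (\<lambda>(g1, g2). pcl_sat P g1 ?sA \<and> pcl_sat P g2 ?sB)"
    have finS: "finite S"
      by (rule finite_subset[of _ "CP P \<times> CP P"]) (auto simp: S_def CP_finite assms(4))
    have L1: "wsem D P (WUplus (WPcl ?sA) (WPcl ?sB)) g =
       bigplus D (\<lambda>x. if Q x then pone D else pzero D) S"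
    proof -
      have "(\<lambda>(g1, g2). ptimes D (wsem D P (WPcl ?sA) g1) (wsem D P (WPcl ?sB) g2)) =
            (\<lambda>x. if Q x then pone D else pzero D)"
      proof (rule ext)
        fix x :: "'p set set \<times> 'p set set"
        obtain a b where x: "x = (a, b)" by (cases x)
        show "(\<lambda>(g1, g2). ptimes D (wsem D P (WPcl ?sA) g1) (wsem D P (WPcl ?sB) g2)) x =
            (if Q x then pone D else pzero D)"
          unfolding x Q_def
          by (cases "pcl_sat P a ?sA"; cases "pcl_sat P b ?sB") (simp_all add: T O)
      qed
      then show ?thesis by (simp add: S_def)
    qed
    have uniq: "\<forall>x\<in>S. \<forall>y\<in>S. Q x \<and> Q y \<longrightarrow> x = y"
      using sA sB by (auto simp: S_def Q_def)
    have ex: "(\<exists>x\<in>S. Q x) \<longleftrightarrow> ?A \<inter> ?B = {} \<and> g = ?A \<union> ?B \<and> ?vA \<and> ?vB"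
    proof
      assume "\<exists>x\<in>S. Q x"
      then obtain a b where ab: "(a, b) \<in> S" "Q (a, b)" by auto
      have a: "a \<in> CP P" "b \<in> CP P" "a \<inter> b = {}" "g = a \<union> b" using ab(1) unfolding S_def by auto
      have "a = ?A \<and> ?vA" using sA[OF a(1)] ab(2) unfolding Q_def by simp
      moreover have "b = ?B \<and> ?vB" using sB[OF a(2)] ab(2) unfolding Q_def by simp
      ultimately show "?A \<inter> ?B = {} \<and> g = ?A \<union> ?B \<and> ?vA \<and> ?vB"
        using a by simp
    next
      assume h: "?A \<inter> ?B = {} \<and> g = ?A \<union> ?B \<and> ?vA \<and> ?vB"
      from h have vA: ?vA and vB: ?vB by auto
      have sa: "pcl_sat P ?A ?sA" using sA[OF ACP[OF vA]] vA by simp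
      have sb: "pcl_sat P ?B ?sB" using sB[OF BCP[OF vB]] vB by simp
      have "(?A, ?B) \<in> S \<and> Q (?A, ?B)"
        unfolding S_def Q_def using h ACP[OF vA] BCP[OF vB] sa sb by simp
      then show "\<exists>x\<in>S. Q x" by blast
    qed
    have LHS: "wsem D P (WUplus (WPcl ?sA) (WPcl ?sB)) g =
       (if ?A \<inter> ?B = {} \<and> g = ?A \<union> ?B \<and> ?vA \<and> ?vB then pone D else pzero D)"
      using L1 bigplus_single[OF pv finS uniq] ex by simp
    show "wsem D P (WUplus (WPcl ?sA) (WPcl ?sB)) g =
          wsem D P (if ?c then WPcl (CPlus ?sA ?sB) else WConst (pzero D)) g"
    proof (cases "pone D = pzero D")
      case True
      then show ?thesis using LHS by simp
    next
      case nz: False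
      show ?thesis
      proof (cases ?c)
        case True
        have "pcl_sat P g (CPlus ?sA ?sB) \<longleftrightarrow> g = ?A \<union> ?B \<and> ?vA \<and> ?vB"
        proof
          assume "pcl_sat P g (CPlus ?sA ?sB)"
          then obtain a b where a: "a \<in> CP P" "b \<in> CP P" "g = a \<union> b"
            "pcl_sat P a ?sA" "pcl_sat P b ?sB" by auto
          then show "g = ?A \<union> ?B \<and> ?vA \<and> ?vB" using sA[OF a(1)] sB[OF a(2)] by simp
        next
          assume h: "g = ?A \<union> ?B \<and> ?vA \<and> ?vB"
          then have vA: ?vA and vB: ?vB by auto
          have sa: "pcl_sat P ?A ?sA" using sA[OF ACP[OF vA]] vA by simp
          have sb: "pcl_sat P ?B ?sB" using sB[OF BCP[OF vB]] vB by simp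
          show "pcl_sat P g (CPlus ?sA ?sB)"
            using h ACP[OF vA] BCP[OF vB] sa sb by (simp only: pcl_sat.simps) blast
        qed
        moreover have "?A \<inter> ?B = {}" if "?vA" "?vB"
        proof (rule ccontr)
          assume "?A \<inter> ?B \<noteq> {}"
          then obtain m m' where mm: "m \<in> set ms" "m' \<in> set ms'" "am P m = am P m'" by auto
          have "wequiv D P (WPcl (CPil m)) (WPcl (CPil m'))"
            unfolding wequiv_def
          proof
            fix \<gamma> assume \<gamma>: "\<gamma> \<in> CP P"
            have fm: "is_full_monomial P m" "is_full_monomial P m'" using mm assms(8,9) by auto
            have iff: "pcl_sat P \<gamma> (CPil m) \<longleftrightarrow> pcl_sat P \<gamma> (CPil m')"
              using cpil_sat[OF fm(1) \<gamma>] cpil_sat[OF fm(2) \<gamma>] mm(3) by simp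
            show "wsem D P (WPcl (CPil m)) \<gamma> = wsem D P (WPcl (CPil m')) \<gamma>"
              by (simp only: wsem.simps iff)
          qed
          then show False using True mm by blast
        qed
        ultimately show ?thesis using LHS True by auto
      next
        case False
        then obtain m m' where mm: "m \<in> set ms" "m' \<in> set ms'"
          and eq: "wequiv D P (WPcl (CPil m)) (WPcl (CPil m'))" by blast
        have fm: "is_full_monomial P m" "is_full_monomial P m'" using mm assms(8,9) by auto
        have "\<not> (?A \<inter> ?B = {} \<and> ?vA \<and> ?vB)"
        proof
          assume h: "?A \<inter> ?B = {} \<and> ?vA \<and> ?vB"
          then have ne: "am P m \<noteq> {}" "am P m' \<noteq> {}" using mm by auto
          have "wsem D P (WPcl (CPil m)) {am P m} = wsem D P (WPcl (CPil m')) {am P m}"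
            using eq single[OF fm(1) ne(1)] unfolding wequiv_def by blast
          then have "pcl_sat P {am P m} (CPil m')"
            using cpil_sat[OF fm(1) single[OF fm(1) ne(1)]] ne nz by (auto split: if_splits)
          then have "am P m = am P m'"
            using cpil_sat[OF fm(2) single[OF fm(1) ne(1)]] by auto
          then show False using h mm by auto
        qed
        then show ?thesis using LHS False by auto
      qed
    qed
  qed
qed

end
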